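(* For all integers $k,m,\lambda\ge0$ there exists $n\ge0$ with the following property. Let $A_1,\dots,A_n,B_1,\dots,B_n$ be pairwise disjoint subsets of the vertex set of a graph $G$, each of cardinality $m$. Then either there exist $A\subseteq A_1\cup\dots\cup A_n$ and $B\subseteq B_1\cup\dots\cup B_n$ with $|A|=|B|=\lambda$ such that no vertex of $A$ has a neighbour in $B$; or there exist $I,J\subseteq\{1,\dots,n\}$ with $|I|=|J|=k$ such that $\bigcup_{i\in I}A_i$ is $G$-complete with $\bigcup_{j\in J}B_j$.
   Context: For a graph $G$ and $A,B\subseteq V(G)$, $A$ is $G$-complete with $B$ if $A\cap B=\emptyset$ and every vertex of $A$ is adjacent to every vertex of $B$. *)

theory Defs
  imports Main
begin

definition simple_graph :: "'a set \<Rightarrow> ('a \<Rightarrow> 'a \<Rightarrow> bool) \<Rightarrow> bool" where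
  "simple_graph V E \<longleftrightarrow> finite V \<and>
     (\<forall>x y. E x y \<longrightarrow> x \<in> V \<and> y \<in> V \<and> x \<noteq> y \<and> E y x)"

definition G_complete :: "('a \<Rightarrow> 'a \<Rightarrow> bool) \<Rightarrow> 'a set \<Rightarrow> 'a set \<Rightarrow> bool" where
  "G_complete E X Y \<longleftrightarrow> X \<inter> Y = {} \<and> (\<forall>x\<in>X. \<forall>y\<in>Y. E x y)"

end

theory Submission
  imports Defs "HOL-Library.Ramsey"
begin

lemma split_set:
  assumes "finite (H::nat set)" "card H = 2*N"
  shows "\<exists>I J. I \<subseteq> H \<and> J \<subseteq> H \<and> card I = N \<and> card J = N \<and> (\<forall>i\<in>I. \<forall>j\<in>J. i<j)"
proof -
  define xs where "xs = sorted_list_of_set H"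
  have s: "sorted_wrt (<) xs" and d: "distinct xs" and st: "set xs = H" and len: "length xs = 2*N"
    using assms by (auto simp: xs_def strict_sorted_list_of_set)
  have sw: "sorted_wrt (<) (take N xs @ drop N xs)" using s by simp
  show ?thesis
  proof (intro exI conjI)
    show "set (take N xs) \<subseteq> H" "set (drop N xs) \<subseteq> H" using st
      by (metis set_take_subset) (metis set_drop_subset st)
    show "card (set (take N xs)) = N" using d len by (simp add: distinct_card)
    show "card (set (drop N xs)) = N" using d len by (simp add: distinct_card)
    show "\<forall>i\<in>set (take N xs). \<forall>j\<in>set (drop N xs). i < j"
      using sw unfolding sorted_wrt_append by blast
  qed
qed

theorem theorem3p1:
  fixes k m l :: nat
  shows "\<exists>n::nat. \<forall>(V::'a set) E (A::nat \<Rightarrow> 'a set) (B::nat \<Rightarrow> 'a set).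
    simple_graph V E \<longrightarrow>
    (\<forall>i\<in>{1..n}. A i \<subseteq> V \<and> B i \<subseteq> V \<and> card (A i) = m \<and> card (B i) = m) \<longrightarrow>
    (\<forall>i\<in>{1..n}. \<forall>j\<in>{1..n}. A i \<inter> B j = {} \<and>
        (i \<noteq> j \<longrightarrow> A i \<inter> A j = {} \<and> B i \<inter> B j = {})) \<longrightarrow>
    (\<exists>X Y. X \<subseteq> (\<Union>i\<in>{1..n}. A i) \<and> Y \<subseteq> (\<Union>i\<in>{1..n}. B i) \<and>
        card X = l \<and> card Y = l \<and> (\<forall>x\<in>X. \<forall>y\<in>Y. \<not> E x y))
    \<or> (\<exists>I J. I \<subseteq> {1..n} \<and> J \<subseteq> {1..n} \<and> card I = k \<and> card J = k \<and>
        G_complete E (\<Union>i\<in>I. A i) (\<Union>j\<in>J. B j))"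
proof -
  define N where "N = max k l"
  define c where "c = Suc (m*m)"
  obtain n :: nat where R: "partn_lst {..<n} (replicate c (2*N)) 2" using ramsey_full[of "replicate c (2*N)" 2] by blast
  show ?thesis
  proof (rule exI[of _ n], intro allI impI)
    fix V E and A B :: "nat \<Rightarrow> 'a set"
    assume G: "simple_graph V E"
      and cd: "\<forall>i\<in>{1..n}. A i \<subseteq> V \<and> B i \<subseteq> V \<and> card (A i) = m \<and> card (B i) = m"
      and dj: "\<forall>i\<in>{1..n}. \<forall>j\<in>{1..n}. A i \<inter> B j = {} \<and>
        (i \<noteq> j \<longrightarrow> A i \<inter> A j = {} \<and> B i \<inter> B j = {})"
    have finV: "finite V" using G by (simp add: simple_graph_def)
    define ga where "ga i = (SOME g. bij_betw g {0..<m} (A i))" for i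
    define gb where "gb i = (SOME g. bij_betw g {0..<m} (B i))" for i
    have ga: "bij_betw (ga i) {0..<m} (A i)" if "i\<in>{1..n}" for i
    proof -
      have "finite (A i)" using cd that finV finite_subset by blast
      then have "\<exists>g. bij_betw g {0..<m} (A i)" using ex_bij_betw_nat_finite cd that by metis
      then show ?thesis unfolding ga_def by (rule someI_ex)
    qed
    have gb: "bij_betw (gb i) {0..<m} (B i)" if "i\<in>{1..n}" for i
    proof -
      have "finite (B i)" using cd that finV finite_subset by blast
      then have "\<exists>g. bij_betw g {0..<m} (B i)" using ex_bij_betw_nat_finite cd that by metis
      then show ?thesis unfolding gb_def by (rule someI_ex)
    qed
    define P where "P i j t \<longleftrightarrow> t < m*m \<and> \<not> E (ga (Suc i) (t div m)) (gb (Suc j) (t mod m))" for i j t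
    define col where "col i j = (if \<forall>x\<in>A (Suc i). \<forall>y\<in>B (Suc j). E x y then 0
        else Suc (SOME t. P i j t))" for i j
    have colprop: "P i j (col i j - 1)" if "i < n" "j < n" "col i j \<noteq> 0" for i j
    proof -
      from that obtain x y where xy: "x \<in> A (Suc i)" "y \<in> B (Suc j)" "\<not> E x y"
        unfolding col_def by (auto split: if_splits)
      have si: "Suc i \<in> {1..n}" "Suc j \<in> {1..n}" using that by auto
      obtain p where p: "p < m" "ga (Suc i) p = x"
        using ga[OF si(1)] xy(1) unfolding bij_betw_def by (metis atLeastLessThan_iff imageE)
      obtain q where q: "q < m" "gb (Suc j) q = y"
        using gb[OF si(2)] xy(2) unfolding bij_betw_def by (metis atLeastLessThan_iff imageE)
      have "p*m+q < m*m"
      proof -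
        have "p*m+q < p*m + m" using q by simp
        also have "\<dots> = Suc p * m" by simp
        also have "\<dots> \<le> m*m" using p by (intro mult_le_mono1) simp
        finally show ?thesis .
      qed
      moreover have "(p*m+q) div m = p" "(p*m+q) mod m = q" using q by auto
      ultimately have "P i j (p*m+q)" unfolding P_def using p q xy by auto
      then have "P i j (SOME t. P i j t)" by (rule someI)
      then show ?thesis using that unfolding col_def by (auto split: if_splits)
    qed
    have colc: "\<forall>x\<in>A (Suc i). \<forall>y\<in>B (Suc j). E x y" if "col i j = 0" for i j
      using that unfolding col_def by (auto split: if_splits)
    define f where "f S = col (Min S) (Max S)" for S
    have fin: "f \<in> nsets {..<n} 2 \<rightarrow> {..<length (replicate c (2*N))}"
    proof
      fix S assume S: "S \<in> nsets {..<n} 2"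
      then obtain x y where "S = {x,y}" "x < n" "y < n" "x \<noteq> y" by (auto elim!: nsets2_E)
      then have "Min S < n" "Max S < n" by auto
      then show "f S \<in> {..<length (replicate c (2*N))}"
        using colprop[of "Min S" "Max S"] unfolding f_def c_def P_def
        by (cases "col (Min S) (Max S) = 0") auto
    qed
    then obtain u where u: "u < c" and "monochromatic {..<n} (2*N) 2 f u"
      using R unfolding partn_lst_def by auto
    then obtain H where H: "H \<in> nsets {..<n} (2*N)" "f ` nsets H 2 \<subseteq> {u}"
      unfolding monochromatic_def by auto
    have Hn: "H \<subseteq> {..<n}" "finite H" "card H = 2*N" using H(1) unfolding nsets_def by auto
    obtain I0 J0 where IJ: "I0 \<subseteq> H" "J0 \<subseteq> H" "card I0 = N" "card J0 = N" "\<forall>i\<in>I0. \<forall>j\<in>J0. i<j"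
      using split_set[OF Hn(2,3)] by blast
    have key: "col i j = u" if "i \<in> I0" "j \<in> J0" for i j
    proof -
      have "i < j" using IJ that by auto
      then have "{i,j} \<in> nsets H 2" using IJ that by auto
      then have "f {i,j} = u" using H(2) by (meson image_subset_iff singletonD)
      then show ?thesis using \<open>i<j\<close> unfolding f_def by (simp add: min_def max_def)
    qed
    have I0n: "I0 \<subseteq> {..<n}" "J0 \<subseteq> {..<n}" using IJ Hn by auto
    show "(\<exists>X Y. X \<subseteq> (\<Union>i\<in>{1..n}. A i) \<and> Y \<subseteq> (\<Union>i\<in>{1..n}. B i) \<and>
        card X = l \<and> card Y = l \<and> (\<forall>x\<in>X. \<forall>y\<in>Y. \<not> E x y))
    \<or> (\<exists>I J. I \<subseteq> {1..n} \<and> J \<subseteq> {1..n} \<and> card I = k \<and> card J = k \<and>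
        G_complete E (\<Union>i\<in>I. A i) (\<Union>j\<in>J. B j))"
    proof (cases "u = 0")
      case True
      obtain I1 where I1: "I1 \<subseteq> I0" "card I1 = k" using IJ(3) N_def obtain_subset_with_card_n[of k I0] by auto
      obtain J1 where J1: "J1 \<subseteq> J0" "card J1 = k" using IJ(4) N_def obtain_subset_with_card_n[of k J0] by auto
      have "Suc ` I1 \<subseteq> {1..n}" "Suc ` J1 \<subseteq> {1..n}" using I1 J1 I0n by auto
      moreover have "card (Suc ` I1) = k" "card (Suc ` J1) = k" using I1 J1 by (simp_all add: card_image)
      moreover have "G_complete E (\<Union>i\<in>Suc ` I1. A i) (\<Union>j\<in>Suc ` J1. B j)"
      proof -
        have "(\<Union>i\<in>Suc ` I1. A i) \<inter> (\<Union>j\<in>Suc ` J1. B j) = {}"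
          using dj \<open>Suc ` I1 \<subseteq> {1..n}\<close> \<open>Suc ` J1 \<subseteq> {1..n}\<close> by blast
        moreover have "\<forall>x\<in>(\<Union>i\<in>Suc ` I1. A i). \<forall>y\<in>(\<Union>j\<in>Suc ` J1. B j). E x y"
          using colc key I1 J1 True by blast
        ultimately show ?thesis unfolding G_complete_def by blast
      qed
      ultimately show ?thesis by blast
    next
      case False
      define p where "p = (u - 1) div m"
      define q where "q = (u - 1) mod m"
      obtain I1 where I1: "I1 \<subseteq> I0" "card I1 = l" using IJ(3) N_def obtain_subset_with_card_n[of l I0] by auto
      obtain J1 where J1: "J1 \<subseteq> J0" "card J1 = l" using IJ(4) N_def obtain_subset_with_card_n[of l J0] by auto
      have ne: "\<not> E (ga (Suc i) p) (gb (Suc j) q) \<and> p < m \<and> q < m" if "i \<in> I0" "j \<in> J0" for i j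
      proof -
        have "P i j (u - 1)" using colprop[of i j] key[OF that] False I0n that by auto
        then show ?thesis unfolding P_def p_def q_def
          by (metis less_mult_imp_div_less mod_less_divisor mult_0_right not_less_zero gr0I)
      qed
      have pq: "p < m \<and> q < m" if "I1 \<noteq> {} \<or> J1 \<noteq> {}"
      proof -
        have "finite I1" "finite J1" using I1(1) J1(1) IJ(1,2) Hn(2) by (meson finite_subset)+
        then have "l \<noteq> 0" using that I1 J1 by auto
        then have "N \<noteq> 0" using N_def by auto
        then have "I0 \<noteq> {}" "J0 \<noteq> {}" using IJ by auto
        then show ?thesis using ne by blast
      qed
      define X where "X = (\<lambda>i. ga (Suc i) p) ` I1"
      define Y where "Y = (\<lambda>j. gb (Suc j) q) ` J1"
      have Xs: "ga (Suc i) p \<in> A (Suc i)" if "i \<in> I1" for i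
      proof -
        have "Suc i \<in> {1..n}" using that I1 I0n by auto
        moreover have "p < m" using pq that by auto
        ultimately show ?thesis using ga[of "Suc i"] unfolding bij_betw_def by auto
      qed
      have Ys: "gb (Suc j) q \<in> B (Suc j)" if "j \<in> J1" for j
      proof -
        have "Suc j \<in> {1..n}" using that J1 I0n by auto
        moreover have "q < m" using pq that by auto
        ultimately show ?thesis using gb[of "Suc j"] unfolding bij_betw_def by auto
      qed
      have "inj_on (\<lambda>i. ga (Suc i) p) I1"
      proof
        fix i i' assume "i \<in> I1" "i' \<in> I1" "ga (Suc i) p = ga (Suc i') p"
        note h = this
        show "i = i'"
        proof (rule ccontr)
          assume ne: "i \<noteq> i'"
          have "Suc i \<in> {1..n}" "Suc i' \<in> {1..n}" using h(1,2) I1 I0n by auto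
          then have "A (Suc i) \<inter> A (Suc i') = {}" using dj ne by auto
          moreover have "ga (Suc i) p \<in> A (Suc i) \<inter> A (Suc i')" using Xs[OF h(1)] Xs[OF h(2)] h(3) by simp
          ultimately show False by simp
        qed
      qed
      moreover have "inj_on (\<lambda>j. gb (Suc j) q) J1"
      proof
        fix i i' assume "i \<in> J1" "i' \<in> J1" "gb (Suc i) q = gb (Suc i') q"
        note h = this
        show "i = i'"
        proof (rule ccontr)
          assume ne: "i \<noteq> i'"
          have "Suc i \<in> {1..n}" "Suc i' \<in> {1..n}" using h(1,2) J1 I0n by auto
          then have "B (Suc i) \<inter> B (Suc i') = {}" using dj ne by auto
          moreover have "gb (Suc i) q \<in> B (Suc i) \<inter> B (Suc i')" using Ys[OF h(1)] Ys[OF h(2)] h(3) by simp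
          ultimately show False by simp
        qed
      qed
      ultimately have "card X = l" "card Y = l" using I1 J1 by (simp_all add: X_def Y_def card_image)
      moreover have "X \<subseteq> (\<Union>i\<in>{1..n}. A i)" using Xs I1 I0n by (force simp: X_def)
      moreover have "Y \<subseteq> (\<Union>i\<in>{1..n}. B i)" using Ys J1 I0n by (force simp: Y_def)
      moreover have "\<forall>x\<in>X. \<forall>y\<in>Y. \<not> E x y" using ne I1 J1 by (auto simp: X_def Y_def)
      ultimately show ?thesis by blast
    qed
  qed
qed

end
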